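(* Let $R$ be a connected quotient root system with base $S$, let $\Phi\subseteq R^+$, and let $\Phi=\inf_I^S(\Psi,X)$ be the canonical form of $\Phi$. Then: (i) $\Psi$ is primitive if and only if $\operatorname{supp} \Phi = \operatorname{supp} \Phi^c = S$; (ii) $\Psi = \emptyset$ if and only if $\operatorname{supp} \Phi$ is a proper subset of $S$ and $\operatorname{supp} \Phi^c = S$; and $\Psi = (R/I)^+$ if and only if $\operatorname{supp} \Phi^c$ is a proper subset of $S$ and $\operatorname{supp} \Phi = S$.
   Context: Quotient root systems (QRS): a QRS $R$ is the set of non-zero images of a root system $\Delta$ (with base $\Sigma$) under the orthogonal projection of its ambient Euclidean space onto $(\mathrm{span}\,J)^\perp$ for some $J\subsetneq\Sigma$, with the induced inner product; its base $S$ consists of the images of $\Sigma\setminus J$, and every root is an integer combination of $S$ with all coefficients $\ge0$ (positive roots, $R^+$) or all $\le0$. $R$ is connected if the graph on $S$ with an edge between $\theta,\theta'$ iff $\langle\theta,\theta'\rangle<0$ is connected. $\Phi^c=R^+\setminus\Phi$. The support of a root is the set of elements of $S$ with non-zero coefficient; the support of a set is the union of supports. For $K\subseteq S$: $R_K=R\cap\mathrm{span}\,K$ (a QRS with base $K$), $R_K^+=R_K\cap R^+$; $\pi_K$ is orthogonal projection onto $(\mathrm{span}\,K)^\perp$, $R/K$ the set of non-zero elements of $\pi_K(R)$ (a QRS with base the images of $S\setminus K$), $(R/K)^+=\pi_K(R^+)\setminus\{0\}$. Inflation: $\inf_K^S(\Psi,X):=\{\alpha\in R^+:\pi_K(\alpha)\in\Psi\}\cup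 X$ for $\Psi\subseteq(R/K)^+$, $X\subseteq R_K^+$. A subset $\Phi\subseteq R^+$ is primitive if $\Phi\neq\emptyset$, $\Phi\ne R^+$ and $\Phi=\inf_K^S(\Psi,X)$ implies $K\in\{\emptyset,S\}$ (same notion inside any QRS, e.g. $R/I$). Canonical form: for connected $R$, the unique expression $\Phi=\inf_I^S(\Psi,X)$ with $I\subsetneq S$ such that either $\Psi$ is primitive, or $\Psi\in\{\emptyset,(R/I)^+\}$ and $I$ is smallest under inclusion with this property. *)

theory Defs
  imports "HOL-Analysis.Analysis"
begin

definition root_system :: "'a::euclidean_space set \<Rightarrow> bool" where
  "root_system D \<longleftrightarrow> finite D \<and> 0 \<notin> D \<and>
     (\<forall>\<alpha>\<in>D. \<forall>\<beta>\<in>D. \<beta> - (2 * (\<beta> \<bullet> \<alpha>) / (\<alpha> \<bullet> \<alpha>)) *\<^sub>R \<alpha> \<in> D \<and>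
                      2 * (\<beta> \<bullet> \<alpha>) / (\<alpha> \<bullet> \<alpha>) \<in> \<int>) \<and>
     (\<forall>\<alpha>\<in>D. \<forall>c::real. c *\<^sub>R \<alpha> \<in> D \<longrightarrow> c = 1 \<or> c = -1)"

definition root_base :: "'a::euclidean_space set \<Rightarrow> 'a set \<Rightarrow> bool" where
  "root_base D B \<longleftrightarrow> B \<subseteq> D \<and> independent B \<and>
     (\<forall>\<alpha>\<in>D. \<exists>c::'a \<Rightarrow> int. \<alpha> = (\<Sum>\<sigma>\<in>B. of_int (c \<sigma>) *\<^sub>R \<sigma>) \<and>
                 ((\<forall>\<sigma>\<in>B. c \<sigma> \<ge> 0) \<or> (\<forall>\<sigma>\<in>B. c \<sigma> \<le> 0)))"

definition perp_proj :: "'a::euclidean_space set \<Rightarrow> 'a \<Rightarrow> 'a" where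
  "perp_proj K v = (THE w. v - w \<in> span K \<and> (\<forall>k\<in>K. orthogonal w k))"

definition is_QRS :: "'a::euclidean_space set \<Rightarrow> 'a set \<Rightarrow> bool" where
  "is_QRS R S \<longleftrightarrow> (\<exists>D B J. root_system D \<and> root_base D B \<and> J \<subset> B \<and>
      R = perp_proj J ` D - {0} \<and> S = perp_proj J ` (B - J))"

definition pos_roots :: "'a::euclidean_space set \<Rightarrow> 'a set \<Rightarrow> 'a set" where
  "pos_roots R S = {\<alpha>\<in>R. \<exists>c::'a \<Rightarrow> int. \<alpha> = (\<Sum>\<theta>\<in>S. of_int (c \<theta>) *\<^sub>R \<theta>) \<and> (\<forall>\<theta>\<in>S. c \<theta> \<ge> 0)}"

definition connected_base :: "'a::euclidean_space set \<Rightarrow> bool" where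
  "connected_base S \<longleftrightarrow>
     (\<forall>\<theta>\<in>S. \<forall>\<theta>'\<in>S. (\<lambda>x y. x \<in> S \<and> y \<in> S \<and> x \<bullet> y < 0)\<^sup>*\<^sup>* \<theta> \<theta>')"

definition supp_root :: "'a::euclidean_space set \<Rightarrow> 'a \<Rightarrow> 'a set" where
  "supp_root S \<alpha> = {\<theta>\<in>S. representation S \<alpha> \<theta> \<noteq> 0}"

definition supp_set :: "'a::euclidean_space set \<Rightarrow> 'a set \<Rightarrow> 'a set" where
  "supp_set S A = (\<Union>\<alpha>\<in>A. supp_root S \<alpha>)"

definition quot_roots :: "'a::euclidean_space set \<Rightarrow> 'a set \<Rightarrow> 'a set" where
  "quot_roots R K = perp_proj K ` R - {0}"

definition quot_pos :: "'a::euclidean_space set \<Rightarrow> 'a set \<Rightarrow> 'a set \<Rightarrow> 'a set" where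
  "quot_pos R S K = perp_proj K ` pos_roots R S - {0}"

definition quot_base :: "'a::euclidean_space set \<Rightarrow> 'a set \<Rightarrow> 'a set" where
  "quot_base S K = perp_proj K ` (S - K)"

definition sub_pos :: "'a::euclidean_space set \<Rightarrow> 'a set \<Rightarrow> 'a set \<Rightarrow> 'a set" where
  "sub_pos R S K = pos_roots R S \<inter> span K"

definition inflation :: "'a::euclidean_space set \<Rightarrow> 'a set \<Rightarrow> 'a set \<Rightarrow> 'a set \<Rightarrow> 'a set \<Rightarrow> 'a set" where
  "inflation R S K \<Psi> X = {\<alpha>\<in>pos_roots R S. perp_proj K \<alpha> \<in> \<Psi>} \<union> X"

definition primitive :: "'a::euclidean_space set \<Rightarrow> 'a set \<Rightarrow> 'a set \<Rightarrow> bool" where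
  "primitive R S \<Phi> \<longleftrightarrow> \<Phi> \<noteq> {} \<and> \<Phi> \<noteq> pos_roots R S \<and>
     (\<forall>K \<Psi> X. K \<subseteq> S \<and> \<Psi> \<subseteq> quot_pos R S K \<and> X \<subseteq> sub_pos R S K \<and>
        \<Phi> = inflation R S K \<Psi> X \<longrightarrow> K = {} \<or> K = S)"

definition canonical_form ::
  "'a::euclidean_space set \<Rightarrow> 'a set \<Rightarrow> 'a set \<Rightarrow> 'a set \<Rightarrow> 'a set \<Rightarrow> 'a set \<Rightarrow> bool" where
  "canonical_form R S \<Phi> I \<Psi> X \<longleftrightarrow>
     I \<subset> S \<and> \<Psi> \<subseteq> quot_pos R S I \<and> X \<subseteq> sub_pos R S I \<and> \<Phi> = inflation R S I \<Psi> X \<and>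
     (primitive (quot_roots R I) (quot_base S I) \<Psi> \<or>
      ((\<Psi> = {} \<or> \<Psi> = quot_pos R S I) \<and>
       (\<forall>I' \<Psi>' X'. I' \<subset> S \<and> (\<Psi>' = {} \<or> \<Psi>' = quot_pos R S I') \<and> X' \<subseteq> sub_pos R S I' \<and>
          \<Phi> = inflation R S I' \<Psi>' X' \<longrightarrow> I \<subseteq> I')))"

end

theory Submission
  imports Defs
begin


lemma perp_proj_ex:
  fixes K :: "'a::euclidean_space set"
  shows "\<exists>w. v - w \<in> span K \<and> (\<forall>k\<in>K. orthogonal w k)"
proof -
  obtain y z where "y \<in> span K" "\<And>w. w \<in> span K \<Longrightarrow> orthogonal z w" "v = y + z"
    using orthogonal_subspace_decomp_exists by blast
  then show ?thesis by (intro exI[of _ z]) (auto intro: span_base)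
qed

lemma perp_proj_uniq:
  fixes K :: "'a::euclidean_space set"
  assumes "v - w1 \<in> span K" "\<forall>k\<in>K. orthogonal w1 k"
    "v - w2 \<in> span K" "\<forall>k\<in>K. orthogonal w2 k"
  shows "w1 = w2"
proof -
  have d: "w2 - w1 \<in> span K" using span_diff[OF assms(1,3)] by (simp add: algebra_simps)
  have "orthogonal (w2 - w1) k" if "k \<in> K" for k
    using assms(2,4) that by (simp add: orthogonal_clauses)
  then have "orthogonal (w2 - w1) (w2 - w1)" using orthogonal_to_span[OF d] by blast
  then show ?thesis by (simp add: orthogonal_def)
qed

lemma perp_proj_props:
  fixes K :: "'a::euclidean_space set"
  shows "v - perp_proj K v \<in> span K" "\<forall>k\<in>K. orthogonal (perp_proj K v) k"
proof -
  have "\<exists>!w. v - w \<in> span K \<and> (\<forall>k\<in>K. orthogonal w k)"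
    using perp_proj_ex perp_proj_uniq by metis
  then have "v - perp_proj K v \<in> span K \<and> (\<forall>k\<in>K. orthogonal (perp_proj K v) k)"
    unfolding perp_proj_def by (rule theI')
  then show "v - perp_proj K v \<in> span K" "\<forall>k\<in>K. orthogonal (perp_proj K v) k" by auto
qed

lemma perp_proj_eq:
  fixes K :: "'a::euclidean_space set"
  assumes "v - w \<in> span K" "\<forall>k\<in>K. orthogonal w k"
  shows "perp_proj K v = w"
  using perp_proj_uniq[OF perp_proj_props assms] .

lemma perp_proj_orth_span:
  fixes K :: "'a::euclidean_space set"
  assumes "u \<in> span K" shows "perp_proj K v \<bullet> u = 0"
  using orthogonal_to_span[OF assms] perp_proj_props(2)[of K v] unfolding orthogonal_def by blast

lemma perp_proj_linear:
  fixes K :: "'a::euclidean_space set"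
  shows "linear (perp_proj K)"
proof (rule linearI)
  fix a b :: 'a and c :: real
  show "perp_proj K (a + b) = perp_proj K a + perp_proj K b"
  proof (rule perp_proj_eq)
    have "a + b - (perp_proj K a + perp_proj K b) = (a - perp_proj K a) + (b - perp_proj K b)" by simp
    then show "a + b - (perp_proj K a + perp_proj K b) \<in> span K"
      using perp_proj_props(1) span_add by metis
    show "\<forall>k\<in>K. orthogonal (perp_proj K a + perp_proj K b) k"
      using perp_proj_props(2)[of K a] perp_proj_props(2)[of K b] by (simp add: orthogonal_def inner_add_left)
  qed
  show "perp_proj K (c *\<^sub>R a) = c *\<^sub>R perp_proj K a"
  proof (rule perp_proj_eq)
    have "c *\<^sub>R a - c *\<^sub>R perp_proj K a = c *\<^sub>R (a - perp_proj K a)" by (simp add: algebra_simps)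
    then show "c *\<^sub>R a - c *\<^sub>R perp_proj K a \<in> span K"
      using perp_proj_props(1) span_mul by metis
    show "\<forall>k\<in>K. orthogonal (c *\<^sub>R perp_proj K a) k"
      using perp_proj_props(2)[of K a] by (simp add: orthogonal_def inner_add_left)
  qed
qed

lemma perp_proj_zero_iff:
  fixes K :: "'a::euclidean_space set"
  shows "perp_proj K v = 0 \<longleftrightarrow> v \<in> span K"
proof
  assume "perp_proj K v = 0" then show "v \<in> span K" using perp_proj_props(1)[of v K] by simp
next
  assume "v \<in> span K" then show "perp_proj K v = 0" by (intro perp_proj_eq) (auto simp: orthogonal_def)
qed

lemma perp_proj_id:
  fixes K :: "'a::euclidean_space set"
  assumes "\<forall>k\<in>K. orthogonal v k" shows "perp_proj K v = v"
  using assms by (intro perp_proj_eq) (auto simp: span_zero)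



lemma rep_coeff:
  fixes S0 :: "'a::euclidean_space set"
  assumes ind: "independent S0" and x: "x = (\<Sum>s\<in>S0. c s *\<^sub>R s)" and s: "s \<in> S0"
  shows "representation S0 x s = c s"
proof -
  have fin: "finite S0" using independent_bound[OF ind] by auto
  have xs: "x \<in> span S0" unfolding x by (intro span_sum span_mul span_base)
  have "x = (\<Sum>s\<in>S0. representation S0 x s *\<^sub>R s)"
    using sum_representation_eq[OF ind xs fin] by simp
  then have "(\<Sum>s\<in>S0. (representation S0 x s - c s) *\<^sub>R s) = 0"
    using x by (simp add: scaleR_diff_left sum_subtractf)
  then show ?thesis using ind s unfolding independent_explicit by auto
qed

lemma rep_span_sub:
  fixes S0 :: "'a::euclidean_space set"
  assumes ind: "independent S0" and "I0 \<subseteq> S0" "x \<in> span I0" "s \<notin> I0"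
  shows "representation S0 x s = 0"
  using representation_extend[OF ind assms(3,2)] representation_ne_zero[of I0 x s] assms(4) by auto

lemma supp_span_sub:
  fixes S0 :: "'a::euclidean_space set"
  assumes ind: "independent S0" and "I0 \<subseteq> S0" "x \<in> span I0"
  shows "supp_root S0 x \<subseteq> I0"
  using rep_span_sub[OF assms] unfolding supp_root_def by auto

lemma in_span_supp:
  fixes S0 :: "'a::euclidean_space set"
  assumes ind: "independent S0" and xs: "x \<in> span S0"
  shows "x \<in> span (supp_root S0 x)"
proof -
  have e: "{b. representation S0 x b \<noteq> 0} = supp_root S0 x"
    unfolding supp_root_def using representation_ne_zero by blast
  have "x = (\<Sum>b | representation S0 x b \<noteq> 0. representation S0 x b *\<^sub>R b)"
    using sum_nonzero_representation_eq[OF ind xs] by simp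
  also have "\<dots> \<in> span (supp_root S0 x)" unfolding e
    by (intro span_sum span_mul span_base) auto
  finally show ?thesis .
qed

lemma supp_set_sub: "supp_set S0 A \<subseteq> S0"
  unfolding supp_set_def supp_root_def by auto

lemma supp_span_set:
  fixes S0 :: "'a::euclidean_space set"
  assumes ind: "independent S0" and "A \<subseteq> span S0"
  shows "A \<subseteq> span (supp_set S0 A)"
proof
  fix x assume "x \<in> A"
  then have "x \<in> span (supp_root S0 x)" "supp_root S0 x \<subseteq> supp_set S0 A"
    using in_span_supp[OF ind] assms(2) unfolding supp_set_def by auto
  then show "x \<in> span (supp_set S0 A)" using span_mono by blast
qed

lemma span_disj_zero:
  fixes B0 :: "'a::euclidean_space set"
  assumes ind: "independent B0" and "J0 \<subseteq> B0" "d \<in> span J0" "d \<in> span (B0 - J0)"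
  shows "d = 0"
proof -
  have fin: "finite B0" using independent_bound[OF ind] by auto
  have ds: "d \<in> span B0" using assms(2,3) span_mono by blast
  have "\<forall>b\<in>B0. representation B0 d b = 0"
  proof
    fix b assume b: "b \<in> B0"
    show "representation B0 d b = 0"
    proof (cases "b \<in> J0")
      case True
      then show ?thesis using rep_span_sub[OF ind _ assms(4), of b] by auto
    next
      case False
      then show ?thesis using rep_span_sub[OF ind assms(2,3), of b] by auto
    qed
  qed
  then show ?thesis using sum_representation_eq[OF ind ds fin] by simp
qed

lemma proj_inj_span:
  fixes B0 :: "'a::euclidean_space set"
  assumes ind: "independent B0" and "J0 \<subseteq> B0"
  shows "inj_on (perp_proj J0) (span (B0 - J0))"
proof (rule inj_onI)
  fix u w assume u: "u \<in> span (B0 - J0)" and w: "w \<in> span (B0 - J0)"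
    and e: "perp_proj J0 u = perp_proj J0 w"
  have "perp_proj J0 (u - w) = 0" using e linear_diff[OF perp_proj_linear, of J0 u w] by simp
  then have "u - w \<in> span J0" by (simp add: perp_proj_zero_iff)
  moreover have "u - w \<in> span (B0 - J0)" using u w span_diff by blast
  ultimately have "u - w = 0" using span_disj_zero[OF ind assms(2)] by blast
  then show "u = w" by simp
qed

lemma proj_inj:
  fixes B0 :: "'a::euclidean_space set"
  assumes ind: "independent B0" and "J0 \<subseteq> B0"
  shows "inj_on (perp_proj J0) (B0 - J0)"
  using inj_on_subset[OF proj_inj_span[OF assms] span_superset] .

lemma proj_indep:
  fixes B0 :: "'a::euclidean_space set"
  assumes ind: "independent B0" and "J0 \<subseteq> B0"
  shows "independent (perp_proj J0 ` (B0 - J0))"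
  using linear_independent_injective_image[OF perp_proj_linear _ proj_inj_span[OF assms]]
    ind dependent_mono[of "B0 - J0" B0] by auto

lemma proj_sum:
  fixes B0 :: "'a::euclidean_space set"
  assumes ind: "independent B0" and J: "J0 \<subseteq> B0"
  shows "perp_proj J0 (\<Sum>b\<in>B0. c b *\<^sub>R b) =
     (\<Sum>s\<in>perp_proj J0 ` (B0 - J0). c (the_inv_into (B0 - J0) (perp_proj J0) s) *\<^sub>R s)"
proof -
  let ?P = "perp_proj J0"
  have fin: "finite B0" using independent_bound[OF ind] by auto
  have "?P (\<Sum>b\<in>B0. c b *\<^sub>R b) = (\<Sum>b\<in>B0. c b *\<^sub>R ?P b)"
    by (simp add: linear_sum[OF perp_proj_linear] linear_scale[OF perp_proj_linear])
  also have "\<dots> = (\<Sum>b\<in>B0 - J0. c b *\<^sub>R ?P b)"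
    by (rule sum.mono_neutral_right[OF fin]) (auto simp: perp_proj_zero_iff span_base)
  also have "\<dots> = (\<Sum>s\<in>?P ` (B0 - J0). c (the_inv_into (B0 - J0) ?P s) *\<^sub>R s)"
    using sum.reindex[OF proj_inj[OF ind J], of "\<lambda>s. c (the_inv_into (B0 - J0) ?P s) *\<^sub>R s"]
      the_inv_into_f_f[OF proj_inj[OF ind J]] by simp
  finally show ?thesis .
qed

lemma proj_rep:
  fixes B0 :: "'a::euclidean_space set"
  assumes ind: "independent B0" and J: "J0 \<subseteq> B0" and v: "v \<in> span B0" and b: "b \<in> B0 - J0"
  shows "representation (perp_proj J0 ` (B0 - J0)) (perp_proj J0 v) (perp_proj J0 b)
         = representation B0 v b"
proof -
  let ?P = "perp_proj J0"
  have fin: "finite B0" using independent_bound[OF ind] by auto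
  have "?P v = ?P (\<Sum>b\<in>B0. representation B0 v b *\<^sub>R b)"
    using sum_representation_eq[OF ind v fin] by simp
  also have "\<dots> = (\<Sum>s\<in>?P ` (B0 - J0). representation B0 v (the_inv_into (B0 - J0) ?P s) *\<^sub>R s)"
    by (rule proj_sum[OF ind J])
  finally have "representation (?P ` (B0 - J0)) (?P v) (?P b) =
      representation B0 v (the_inv_into (B0 - J0) ?P (?P b))"
    by (intro rep_coeff[OF proj_indep[OF ind J]]) (use b in auto)
  then show ?thesis using the_inv_into_f_f[OF proj_inj[OF ind J] b] by simp
qed

lemma proj_supp:
  fixes B0 :: "'a::euclidean_space set"
  assumes ind: "independent B0" and J: "J0 \<subseteq> B0" and v: "v \<in> span B0"
  shows "supp_root (perp_proj J0 ` (B0 - J0)) (perp_proj J0 v)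
       = perp_proj J0 ` {b\<in>B0 - J0. representation B0 v b \<noteq> 0}"
  unfolding supp_root_def using proj_rep[OF assms] by auto



lemma rep_zero_imp:
  fixes S0 :: "'a::euclidean_space set"
  assumes ind: "independent S0" and y: "y \<in> span S0" and z: "\<forall>t\<in>S0. representation S0 y t = 0"
  shows "y = 0"
proof -
  have fin: "finite S0" using independent_bound[OF ind] by auto
  show ?thesis using sum_representation_eq[OF ind y fin] z by simp
qed

lemma pos_roots_span: "pos_roots R0 S0 \<subseteq> span S0"
proof
  fix x assume "x \<in> pos_roots R0 S0"
  then obtain c :: "'a \<Rightarrow> int" where "x = (\<Sum>s\<in>S0. of_int (c s) *\<^sub>R s)"
    unfolding pos_roots_def by auto
  then show "x \<in> span S0" by (auto intro!: span_sum span_mul intro: span_base)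
qed

lemma pos_roots_sub: "pos_roots R0 S0 \<subseteq> R0"
  unfolding pos_roots_def by auto

lemma quot_pos_eq:
  fixes S0 :: "'a::euclidean_space set"
  assumes ind: "independent S0" and I: "I0 \<subseteq> S0"
    and pm: "\<forall>x\<in>R0. x \<in> pos_roots R0 S0 \<or> - x \<in> pos_roots R0 S0"
  shows "pos_roots (quot_roots R0 I0) (quot_base S0 I0) = quot_pos R0 S0 I0"
proof -
  let ?Q = "perp_proj I0"
  let ?S = "?Q ` (S0 - I0)"
  let ?inv = "the_inv_into (S0 - I0) ?Q"
  have indS: "independent ?S" using proj_indep[OF ind I] .
  have inv_in: "?inv t \<in> S0 - I0" if "t \<in> ?S" for t
    by (rule the_inv_into_into[OF proj_inj[OF ind I] that]) simp
  have key: "\<exists>c::'a\<Rightarrow>int. ?Q x = (\<Sum>t\<in>?S. of_int (c t) *\<^sub>R t) \<and> (\<forall>t\<in>?S. c t \<ge> 0)"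
    if xp: "x \<in> pos_roots R0 S0" for x
  proof -
    obtain c :: "'a \<Rightarrow> int" where c: "x = (\<Sum>s\<in>S0. of_int (c s) *\<^sub>R s)" "\<forall>s\<in>S0. c s \<ge> 0"
      using xp unfolding pos_roots_def by auto
    have "?Q x = (\<Sum>t\<in>?S. of_int (c (?inv t)) *\<^sub>R t)"
      unfolding c(1) using proj_sum[OF ind I, of "\<lambda>s. of_int (c s)"] by simp
    moreover have "\<forall>t\<in>?S. c (?inv t) \<ge> 0" using c(2) inv_in by auto
    ultimately show ?thesis by (intro exI[of _ "\<lambda>t. c (?inv t)"]) auto
  qed
  show ?thesis
  proof
    show "quot_pos R0 S0 I0 \<subseteq> pos_roots (quot_roots R0 I0) (quot_base S0 I0)"
    proof
      fix y assume "y \<in> quot_pos R0 S0 I0"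
      then obtain x where x: "x \<in> pos_roots R0 S0" "y = ?Q x" "y \<noteq> 0"
        unfolding quot_pos_def by auto
      have "y \<in> quot_roots R0 I0" using x pos_roots_sub unfolding quot_roots_def by auto
      then show "y \<in> pos_roots (quot_roots R0 I0) (quot_base S0 I0)"
        using key[OF x(1)] x(2) unfolding pos_roots_def quot_base_def by auto
    qed
  next
    show "pos_roots (quot_roots R0 I0) (quot_base S0 I0) \<subseteq> quot_pos R0 S0 I0"
    proof
      fix y assume y: "y \<in> pos_roots (quot_roots R0 I0) (quot_base S0 I0)"
      then obtain d :: "'a \<Rightarrow> int" where d: "y = (\<Sum>t\<in>?S. of_int (d t) *\<^sub>R t)" "\<forall>t\<in>?S. d t \<ge> 0"
        unfolding pos_roots_def quot_base_def by auto
      from y obtain x where x: "x \<in> R0" "y = ?Q x" "y \<noteq> 0"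
        unfolding pos_roots_def quot_roots_def by auto
      show "y \<in> quot_pos R0 S0 I0"
      proof (cases "x \<in> pos_roots R0 S0")
        case True then show ?thesis using x unfolding quot_pos_def by auto
      next
        case False
        then have nx: "- x \<in> pos_roots R0 S0" using pm x(1) by auto
        obtain c :: "'a\<Rightarrow>int" where c: "?Q (-x) = (\<Sum>t\<in>?S. of_int (c t) *\<^sub>R t)" "\<forall>t\<in>?S. c t \<ge> 0"
          using key[OF nx] by blast
        have ys: "y \<in> span ?S" unfolding d(1) by (intro span_sum span_mul span_base)
        have my: "- y = ?Q (-x)" using x(2) linear_neg[OF perp_proj_linear, of I0 x] by simp
        have "\<forall>t\<in>?S. representation ?S y t = 0"
        proof
          fix t assume t: "t \<in> ?S"
          have a: "representation ?S y t = of_int (d t)" using rep_coeff[OF indS d(1) t] .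
          have "representation ?S (- y) t = of_int (c t)" using rep_coeff[OF indS _ t] c(1) my by simp
          moreover have "representation ?S (- y) t = - representation ?S y t"
            using representation_neg[OF indS ys] by simp
          ultimately show "representation ?S y t = 0" using a c(2) d(2) t
            by (smt (verit) of_int_0_le_iff)
        qed
        then have "y = 0" using rep_zero_imp[OF indS ys] by simp
        then show ?thesis using x(3) by simp
      qed
    qed
  qed
qed

lemma prim_supp:
  fixes S' :: "'a::euclidean_space set"
  assumes ind: "independent S'" and z: "0 \<notin> R'" and prim: "primitive R' S' \<Psi>"
    and sub: "\<Psi> \<subseteq> pos_roots R' S'"
  shows "supp_set S' \<Psi> = S'" "supp_set S' (pos_roots R' S' - \<Psi>) = S'"
proof -
  let ?PR = "pos_roots R' S'"
  have z': "0 \<notin> ?PR" using z pos_roots_sub by blast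
  have ne: "\<Psi> \<noteq> {}" "\<Psi> \<noteq> ?PR" using prim unfolding primitive_def by auto
  have decomp: "K = {} \<or> K = S'" if "K \<subseteq> S'" "\<Psi>' \<subseteq> quot_pos R' S' K" "X' \<subseteq> sub_pos R' S' K"
      "\<Psi> = inflation R' S' K \<Psi>' X'" for K \<Psi>' X'
    using prim that unfolding primitive_def by blast
  show "supp_set S' \<Psi> = S'"
  proof -
    let ?K = "supp_set S' \<Psi>"
    have sp: "\<Psi> \<subseteq> span ?K" using supp_span_set[OF ind, of \<Psi>] sub pos_roots_span[of R' S'] by blast
    have "?K = {} \<or> ?K = S'"
    proof (rule decomp[of ?K "{}" \<Psi>])
      show "?K \<subseteq> S'" by (rule supp_set_sub)
      show "{} \<subseteq> quot_pos R' S' ?K" by simp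
      show "\<Psi> \<subseteq> sub_pos R' S' ?K" using sp sub unfolding sub_pos_def by blast
      show "\<Psi> = inflation R' S' ?K {} \<Psi>" unfolding inflation_def by simp
    qed
    moreover have "?K \<noteq> {}"
    proof
      assume "?K = {}"
      then have "\<Psi> \<subseteq> {0}" using sp by simp
      then show False using ne(1) sub z' by blast
    qed
    ultimately show ?thesis by simp
  qed
  show "supp_set S' (?PR - \<Psi>) = S'"
  proof -
    let ?K = "supp_set S' (?PR - \<Psi>)"
    have sp: "?PR - \<Psi> \<subseteq> span ?K" using supp_span_set[OF ind, of "?PR - \<Psi>"] pos_roots_span[of R' S'] by blast
    have inf: "\<Psi> = inflation R' S' ?K (quot_pos R' S' ?K) (\<Psi> \<inter> span ?K)"
    proof -
      have a: "perp_proj ?K y \<in> quot_pos R' S' ?K \<longleftrightarrow> y \<notin> span ?K" if "y \<in> ?PR" for y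
        unfolding quot_pos_def using that perp_proj_zero_iff[of ?K y] by blast
      show ?thesis unfolding inflation_def using a sub sp by blast
    qed
    have "?K = {} \<or> ?K = S'"
      by (rule decomp[OF supp_set_sub _ _ inf]) (use sub in \<open>auto simp: sub_pos_def\<close>)
    moreover have "?K \<noteq> {}"
    proof
      assume "?K = {}"
      then have "?PR - \<Psi> \<subseteq> {0}" using sp by simp
      then show False using ne sub z' by blast
    qed
    ultimately show ?thesis by simp
  qed
qed



locale rsys =
  fixes D B :: "'a::euclidean_space set"
  assumes rs: "root_system D" and rb: "root_base D B"
begin

lemma indB: "independent B" using rb unfolding root_base_def by auto
lemma finB: "finite B" using independent_bound[OF indB] by auto
lemma BD: "B \<subseteq> D" using rb unfolding root_base_def by auto
lemma zD: "0 \<notin> D" using rs unfolding root_system_def by auto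
lemma refl_D: "\<alpha> \<in> D \<Longrightarrow> \<beta> \<in> D \<Longrightarrow> \<beta> - (2 * (\<beta> \<bullet> \<alpha>) / (\<alpha> \<bullet> \<alpha>)) *\<^sub>R \<alpha> \<in> D"
  using rs unfolding root_system_def by auto
lemma cartan_int: "\<alpha> \<in> D \<Longrightarrow> \<beta> \<in> D \<Longrightarrow> 2 * (\<beta> \<bullet> \<alpha>) / (\<alpha> \<bullet> \<alpha>) \<in> \<int>"
  using rs unfolding root_system_def by auto

lemma negD: "\<alpha> \<in> D \<Longrightarrow> - \<alpha> \<in> D"
proof -
  assume a: "\<alpha> \<in> D"
  then have "\<alpha> \<noteq> 0" using zD by auto
  then have "\<alpha> \<bullet> \<alpha> \<noteq> 0" by simp
  then have "2 * (\<alpha> \<bullet> \<alpha>) / (\<alpha> \<bullet> \<alpha>) = 2" by simp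
  then have "\<alpha> - (2 * (\<alpha> \<bullet> \<alpha>) / (\<alpha> \<bullet> \<alpha>)) *\<^sub>R \<alpha> = - \<alpha>" by (simp add: scaleR_2)
  then show ?thesis using refl_D[OF a a] by simp
qed

lemma D_coeffs: "\<alpha> \<in> D \<Longrightarrow> \<exists>c::'a\<Rightarrow>int. \<alpha> = (\<Sum>b\<in>B. of_int (c b) *\<^sub>R b) \<and>
    (\<forall>b\<in>B. representation B \<alpha> b = of_int (c b)) \<and> ((\<forall>b\<in>B. c b \<ge> 0) \<or> (\<forall>b\<in>B. c b \<le> 0))"
proof -
  assume a: "\<alpha> \<in> D"
  then obtain c :: "'a \<Rightarrow> int" where c: "\<alpha> = (\<Sum>b\<in>B. of_int (c b) *\<^sub>R b)"
     "(\<forall>b\<in>B. c b \<ge> 0) \<or> (\<forall>b\<in>B. c b \<le> 0)"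
    using rb unfolding root_base_def by blast
  have "\<forall>b\<in>B. representation B \<alpha> b = of_int (c b)" using rep_coeff[OF indB c(1)] by blast
  then show ?thesis using c by blast
qed

lemma D_span: "\<alpha> \<in> D \<Longrightarrow> \<alpha> \<in> span B"
proof -
  assume "\<alpha> \<in> D"
  then obtain c :: "'a\<Rightarrow>int" where "\<alpha> = (\<Sum>b\<in>B. of_int (c b) *\<^sub>R b)" using D_coeffs by blast
  then show ?thesis by (auto intro!: span_sum span_mul intro: span_base)
qed

lemma rep_basis': "b \<in> B \<Longrightarrow> representation B b x = (if x = b then 1 else 0)"
  using representation_basis[OF indB] by simp

lemma diff_not_root:
  assumes s: "\<sigma> \<in> B" and t: "\<theta> \<in> B" and ne: "\<sigma> \<noteq> \<theta>" and d: "\<sigma> - \<theta> \<in> D"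
  shows False
proof -
  obtain c :: "'a\<Rightarrow>int" where c: "\<forall>b\<in>B. representation B (\<sigma> - \<theta>) b = of_int (c b)"
     "(\<forall>b\<in>B. c b \<ge> 0) \<or> (\<forall>b\<in>B. c b \<le> 0)"
    using D_coeffs[OF d] by blast
  have r: "representation B (\<sigma> - \<theta>) x = representation B \<sigma> x - representation B \<theta> x" for x
    using representation_diff[OF indB span_base[OF t] span_base[OF s]] by simp
  have "representation B (\<sigma> - \<theta>) \<sigma> = 1" "representation B (\<sigma> - \<theta>) \<theta> = -1"
    using r rep_basis'[OF s] rep_basis'[OF t] ne by auto
  then have "real_of_int (c \<sigma>) = 1" "real_of_int (c \<theta>) = -1" using c(1) s t by auto
  then have "c \<sigma> = 1" "c \<theta> = -1" by simp_all
  then show False using c(2) s t by force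
qed

lemma simple_inner_nonpos:
  assumes s: "\<sigma> \<in> B" and t: "\<theta> \<in> B" and ne: "\<sigma> \<noteq> \<theta>"
  shows "\<sigma> \<bullet> \<theta> \<le> 0"
proof (rule ccontr)
  assume "\<not> \<sigma> \<bullet> \<theta> \<le> 0"
  then have pos: "\<sigma> \<bullet> \<theta> > 0" by simp
  have sD: "\<sigma> \<in> D" and tD: "\<theta> \<in> D" using s t BD by auto
  have s0: "\<sigma> \<noteq> 0" and t0: "\<theta> \<noteq> 0" using sD tD zD by auto
  have ss: "\<sigma> \<bullet> \<sigma> > 0" and tt: "\<theta> \<bullet> \<theta> > 0" using s0 t0 by auto
  obtain m :: int where m: "2 * (\<sigma> \<bullet> \<theta>) / (\<theta> \<bullet> \<theta>) = of_int m"
    using cartan_int[OF tD sD] Ints_cases by metis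
  obtain n :: int where n: "2 * (\<theta> \<bullet> \<sigma>) / (\<sigma> \<bullet> \<sigma>) = of_int n"
    using cartan_int[OF sD tD] Ints_cases by metis
  have "2 * (\<sigma> \<bullet> \<theta>) / (\<theta> \<bullet> \<theta>) > 0" using pos tt by simp
  then have "of_int m > (0::real)" using m by simp
  then have m1: "m \<ge> 1" by simp
  have n': "2 * (\<sigma> \<bullet> \<theta>) / (\<sigma> \<bullet> \<sigma>) = of_int n" using n by (simp add: inner_commute)
  have "2 * (\<sigma> \<bullet> \<theta>) / (\<sigma> \<bullet> \<sigma>) > 0" using pos ss by simp
  then have "of_int n > (0::real)" using n' by simp
  then have n1: "n \<ge> 1" by simp
  have neq: "\<bar>\<sigma> \<bullet> \<theta>\<bar> \<noteq> norm \<sigma> * norm \<theta>"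
  proof
    assume "\<bar>\<sigma> \<bullet> \<theta>\<bar> = norm \<sigma> * norm \<theta>"
    then have "norm \<sigma> *\<^sub>R \<theta> = norm \<theta> *\<^sub>R \<sigma> \<or> norm \<sigma> *\<^sub>R \<theta> = - norm \<theta> *\<^sub>R \<sigma>"
      using norm_cauchy_schwarz_abs_eq by blast
    then have "representation B (norm \<sigma> *\<^sub>R \<theta>) \<theta> = representation B (norm \<theta> *\<^sub>R \<sigma>) \<theta> \<or>
        representation B (norm \<sigma> *\<^sub>R \<theta>) \<theta> = representation B (- (norm \<theta> *\<^sub>R \<sigma>)) \<theta>" by auto
    then show False
      using representation_scale[OF indB span_base[OF t], of "norm \<sigma>"]
        representation_scale[OF indB span_base[OF s], of "norm \<theta>"]
        representation_neg[OF indB span_mul[OF span_base[OF s]], of "norm \<theta>"]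
        rep_basis'[OF s] rep_basis'[OF t] ne s0 by auto
  qed
  have "\<bar>\<sigma> \<bullet> \<theta>\<bar> \<le> norm \<sigma> * norm \<theta>" by (rule Cauchy_Schwarz_ineq2)
  with neq have lt: "\<bar>\<sigma> \<bullet> \<theta>\<bar> < norm \<sigma> * norm \<theta>" by simp
  have "(\<sigma> \<bullet> \<theta>)^2 < (norm \<sigma> * norm \<theta>)^2"
    using power_strict_mono[OF lt abs_ge_zero, of 2] by simp
  also have "\<dots> = (\<sigma> \<bullet> \<sigma>) * (\<theta> \<bullet> \<theta>)" by (simp add: power_mult_distrib power2_norm_eq_inner)
  finally have sq: "(\<sigma> \<bullet> \<theta>)^2 < (\<sigma> \<bullet> \<sigma>) * (\<theta> \<bullet> \<theta>)" .
  have "of_int m * of_int n = (2 * (\<sigma> \<bullet> \<theta>) / (\<theta> \<bullet> \<theta>)) * (2 * (\<sigma> \<bullet> \<theta>) / (\<sigma> \<bullet> \<sigma>))"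
    using m n' by simp
  also have "\<dots> = 4 * (\<sigma> \<bullet> \<theta>)^2 / ((\<sigma> \<bullet> \<sigma>) * (\<theta> \<bullet> \<theta>))"
    by (simp add: power2_eq_square mult.commute)
  also have "\<dots> < 4" using sq ss tt by (simp add: field_simps)
  finally have "real_of_int (m * n) < real_of_int 4" by simp
  then have mn: "m * n < 4" by (simp only: of_int_less_iff)
  have "m = 1 \<or> n = 1"
  proof (rule ccontr)
    assume "\<not> (m = 1 \<or> n = 1)"
    then have "m \<ge> 2" "n \<ge> 2" using m1 n1 by auto
    then have "2 * 2 \<le> m * n" using mult_mono[of 2 m 2 n] by simp
    then show False using mn by simp
  qed
  then show False
  proof
    assume "m = 1"
    then have "\<sigma> - \<theta> \<in> D" using refl_D[OF tD sD] m by simp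
    then show False using diff_not_root s t ne by blast
  next
    assume "n = 1"
    then have "\<theta> - \<sigma> \<in> D" using refl_D[OF sD tD] n by simp
    then show False using diff_not_root t s ne by blast
  qed
qed

definition Dp :: "'a \<Rightarrow> bool" where
  "Dp \<alpha> \<longleftrightarrow> \<alpha> \<in> D \<and> (\<forall>b\<in>B. representation B \<alpha> b \<ge> 0)"

definition E :: "'a set \<Rightarrow> 'a \<Rightarrow> 'a \<Rightarrow> bool" where
  "E V x y \<longleftrightarrow> x \<in> B \<and> y \<in> B \<and> y \<in> V \<and> x \<bullet> y < 0"

lemma inner_expand: "\<alpha> \<in> D \<Longrightarrow> \<alpha> \<bullet> z = (\<Sum>b\<in>B. representation B \<alpha> b * (b \<bullet> z))"
proof -
  assume "\<alpha> \<in> D"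
  then have "\<alpha> = (\<Sum>b\<in>B. representation B \<alpha> b *\<^sub>R b)"
    using sum_representation_eq[OF indB D_span finB] by simp
  then have "\<alpha> \<bullet> z = (\<Sum>b\<in>B. representation B \<alpha> b *\<^sub>R b) \<bullet> z" by simp
  also have "\<dots> = (\<Sum>b\<in>B. representation B \<alpha> b * (b \<bullet> z))" by (simp add: inner_sum_left)
  finally show ?thesis .
qed

lemma path:
  assumes "(E V)\<^sup>*\<^sup>* x y"
  shows "Dp \<alpha> \<Longrightarrow> representation B \<alpha> x > 0 \<Longrightarrow> \<exists>\<alpha>'. Dp \<alpha>' \<and> \<alpha>' - \<alpha> \<in> span V \<and>
     (\<forall>b\<in>B. representation B \<alpha> b > 0 \<longrightarrow> representation B \<alpha>' b > 0) \<and> representation B \<alpha>' y > 0"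
  using assms
proof (induction rule: rtranclp_induct)
  case base
  then show ?case by (intro exI[of _ \<alpha>]) (auto simp: span_zero)
next
  case (step y z)
  obtain \<alpha>1 where a1: "Dp \<alpha>1" "\<alpha>1 - \<alpha> \<in> span V"
     "\<forall>b\<in>B. representation B \<alpha> b > 0 \<longrightarrow> representation B \<alpha>1 b > 0" "representation B \<alpha>1 y > 0"
    using step by blast
  have yB: "y \<in> B" and zB: "z \<in> B" and zV: "z \<in> V" and yz: "y \<bullet> z < 0"
    using step(2) unfolding E_def by auto
  have yz_ne: "y \<noteq> z" using yz by (metis inner_ge_zero not_le)
  show ?case
  proof (cases "representation B \<alpha>1 z > 0")
    case True then show ?thesis using a1 by blast
  next
    case False
    have a1D: "\<alpha>1 \<in> D" using a1(1) unfolding Dp_def by auto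
    have nn: "\<forall>b\<in>B. representation B \<alpha>1 b \<ge> 0" using a1(1) unfolding Dp_def by auto
    have rz: "representation B \<alpha>1 z = 0" using False nn zB by force
    have "\<alpha>1 \<bullet> z = (\<Sum>b\<in>B. representation B \<alpha>1 b * (b \<bullet> z))" by (rule inner_expand[OF a1D])
    also have "\<dots> = representation B \<alpha>1 y * (y \<bullet> z) + (\<Sum>b\<in>B - {y}. representation B \<alpha>1 b * (b \<bullet> z))"
      by (rule sum.remove[OF finB yB])
    also have "\<dots> < 0"
    proof -
      have "representation B \<alpha>1 y * (y \<bullet> z) < 0" using a1(4) yz by (simp add: mult_pos_neg)
      moreover have "(\<Sum>b\<in>B - {y}. representation B \<alpha>1 b * (b \<bullet> z)) \<le> 0"
      proof (rule sum_nonpos)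
        fix b assume b: "b \<in> B - {y}"
        show "representation B \<alpha>1 b * (b \<bullet> z) \<le> 0"
        proof (cases "b = z")
          case True then show ?thesis using rz by simp
        next
          case False
          then have "b \<bullet> z \<le> 0" using simple_inner_nonpos b zB by auto
          then show ?thesis using nn b by (simp add: mult_nonneg_nonpos)
        qed
      qed
      ultimately show ?thesis by linarith
    qed
    finally have neg: "\<alpha>1 \<bullet> z < 0" .
    have zD': "z \<in> D" using zB BD by auto
    have zz: "z \<bullet> z > 0" using zD' zD by (metis inner_gt_zero_iff)
    define k where "k = - (2 * (\<alpha>1 \<bullet> z) / (z \<bullet> z))"
    have kpos: "k > 0" unfolding k_def using neg zz by (simp add: divide_neg_pos)
    define \<alpha>2 where "\<alpha>2 = \<alpha>1 + k *\<^sub>R z"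
    have a2D: "\<alpha>2 \<in> D" using refl_D[OF zD' a1D] unfolding \<alpha>2_def k_def by simp
    have rep2: "representation B \<alpha>2 b = representation B \<alpha>1 b + k * (if b = z then 1 else 0)" for b
      unfolding \<alpha>2_def
      using representation_add[OF indB span_mul[OF span_base[OF zB]] D_span[OF a1D], of k]
        representation_scale[OF indB span_base[OF zB], of k] rep_basis'[OF zB] by simp
    have "Dp \<alpha>2" unfolding Dp_def using a2D nn rep2 kpos by (simp add: add_nonneg_nonneg)
    moreover have "\<alpha>2 - \<alpha> \<in> span V"
    proof -
      have "\<alpha>2 - \<alpha> = (\<alpha>1 - \<alpha>) + k *\<^sub>R z" unfolding \<alpha>2_def by simp
      then show ?thesis using a1(2) span_add span_mul span_base[OF zV] by metis
    qed
    moreover have "\<forall>b\<in>B. representation B \<alpha> b > 0 \<longrightarrow> representation B \<alpha>2 b > 0"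
      using a1(3) rep2 kpos by (simp add: add_pos_nonneg)
    moreover have "representation B \<alpha>2 z > 0" using rep2 kpos rz by simp
    ultimately show ?thesis by blast
  qed
qed

end



lemma pos_rep_nonneg:
  fixes S0 :: "'a::euclidean_space set"
  assumes ind: "independent S0" and x: "x \<in> pos_roots R0 S0" and t: "t \<in> S0"
  shows "representation S0 x t \<ge> 0"
proof -
  obtain c :: "'a \<Rightarrow> int" where c: "x = (\<Sum>s\<in>S0. of_int (c s) *\<^sub>R s)" "\<forall>s\<in>S0. c s \<ge> 0"
    using x unfolding pos_roots_def by auto
  show ?thesis using rep_coeff[OF ind c(1) t] c(2) t by simp
qed

lemma pos_neg_zero:
  fixes S0 :: "'a::euclidean_space set"
  assumes ind: "independent S0" and x: "x \<in> pos_roots R0 S0" and nx: "- x \<in> pos_roots R0 S0"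
  shows "x = 0"
proof -
  have xs: "x \<in> span S0" using x pos_roots_span by blast
  have "\<forall>t\<in>S0. representation S0 x t = 0"
  proof
    fix t assume t: "t \<in> S0"
    have "representation S0 (- x) t = - representation S0 x t"
      using representation_neg[OF ind xs] by simp
    then show "representation S0 x t = 0"
      using pos_rep_nonneg[OF ind x t] pos_rep_nonneg[OF ind nx t] by simp
  qed
  then show ?thesis using rep_zero_imp[OF ind xs] by simp
qed

locale qrs = rsys +
  fixes J R S :: "'a::euclidean_space set"
  assumes JB: "J \<subset> B" and Rdef: "R = perp_proj J ` D - {0}" and Sdef: "S = perp_proj J ` (B - J)"
begin

abbreviation "P \<equiv> perp_proj J"

lemma JB': "J \<subseteq> B" using JB by auto
lemma indS: "independent S" unfolding Sdef by (rule proj_indep[OF indB JB'])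
lemma finS: "finite S" using independent_bound[OF indS] by auto
lemma injP: "inj_on P (B - J)" by (rule proj_inj[OF indB JB'])

lemma P_rep: "\<alpha> \<in> D \<Longrightarrow> b \<in> B - J \<Longrightarrow> representation S (P \<alpha>) (P b) = representation B \<alpha> b"
  unfolding Sdef by (rule proj_rep[OF indB JB' D_span])

lemma P_comb:
  assumes "\<forall>b\<in>B. c b \<ge> 0"
  shows "\<exists>d::'a\<Rightarrow>int. P (\<Sum>b\<in>B. of_int (c b) *\<^sub>R b) = (\<Sum>s\<in>S. of_int (d s) *\<^sub>R s) \<and> (\<forall>s\<in>S. d s \<ge> 0)"
proof -
  let ?inv = "the_inv_into (B - J) P"
  have "P (\<Sum>b\<in>B. of_int (c b) *\<^sub>R b) = (\<Sum>s\<in>S. of_int (c (?inv s)) *\<^sub>R s)"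
    unfolding Sdef using proj_sum[OF indB JB', of "\<lambda>b. of_int (c b)"] by simp
  moreover have "\<forall>s\<in>S. c (?inv s) \<ge> 0"
  proof
    fix s assume "s \<in> S"
    then have "?inv s \<in> B - J" unfolding Sdef by (rule the_inv_into_into[OF injP]) simp
    then show "c (?inv s) \<ge> 0" using assms by auto
  qed
  ultimately show ?thesis by (intro exI[of _ "\<lambda>s. c (?inv s)"]) auto
qed

lemma P_pos: assumes "Dp \<alpha>" "P \<alpha> \<noteq> 0" shows "P \<alpha> \<in> pos_roots R S"
proof -
  have aD: "\<alpha> \<in> D" using assms unfolding Dp_def by auto
  obtain c :: "'a\<Rightarrow>int" where c: "\<alpha> = (\<Sum>b\<in>B. of_int (c b) *\<^sub>R b)"
    "\<forall>b\<in>B. representation B \<alpha> b = of_int (c b)"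
    using D_coeffs[OF aD] by blast
  have "\<forall>b\<in>B. c b \<ge> 0" using c(2) assms(1) unfolding Dp_def by (metis of_int_0_le_iff)
  then obtain d :: "'a\<Rightarrow>int" where "P \<alpha> = (\<Sum>s\<in>S. of_int (d s) *\<^sub>R s)" "\<forall>s\<in>S. d s \<ge> 0"
    using P_comb c(1) by metis
  moreover have "P \<alpha> \<in> R" unfolding Rdef using aD assms(2) by auto
  ultimately show ?thesis unfolding pos_roots_def by auto
qed

lemma R_pm: "x \<in> R \<Longrightarrow> (\<exists>\<alpha>. Dp \<alpha> \<and> P \<alpha> = x) \<or> (\<exists>\<alpha>. Dp \<alpha> \<and> P \<alpha> = - x)"
proof -
  assume "x \<in> R"
  then obtain \<alpha> where a: "\<alpha> \<in> D" "x = P \<alpha>" "x \<noteq> 0" unfolding Rdef by auto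
  obtain c :: "'a\<Rightarrow>int" where c: "\<alpha> = (\<Sum>b\<in>B. of_int (c b) *\<^sub>R b)"
    "\<forall>b\<in>B. representation B \<alpha> b = of_int (c b)" "(\<forall>b\<in>B. c b \<ge> 0) \<or> (\<forall>b\<in>B. c b \<le> 0)"
    using D_coeffs[OF a(1)] by blast
  show ?thesis
  proof (cases "\<forall>b\<in>B. c b \<ge> 0")
    case True
    then have "Dp \<alpha>" unfolding Dp_def using a(1) c(2) by simp
    then show ?thesis using a by blast
  next
    case False
    then have neg: "\<forall>b\<in>B. c b \<le> 0" using c(3) by blast
    have nD: "- \<alpha> \<in> D" using negD[OF a(1)] .
    have "representation B (- \<alpha>) b = - representation B \<alpha> b" for b
      using representation_neg[OF indB D_span[OF a(1)]] by simp
    then have "Dp (- \<alpha>)" unfolding Dp_def using nD c(2) neg by simp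
    moreover have "P (- \<alpha>) = - x" using a(2) linear_neg[OF perp_proj_linear, of J \<alpha>] by simp
    ultimately show ?thesis by blast
  qed
qed

lemma pm: "\<forall>x\<in>R. x \<in> pos_roots R S \<or> - x \<in> pos_roots R S"
proof
  fix x assume x: "x \<in> R"
  then have x0: "x \<noteq> 0" unfolding Rdef by auto
  from R_pm[OF x] show "x \<in> pos_roots R S \<or> - x \<in> pos_roots R S"
    using P_pos x0 by force
qed

lemma lift: assumes "x \<in> pos_roots R S" shows "\<exists>\<alpha>. Dp \<alpha> \<and> P \<alpha> = x"
proof -
  have xR: "x \<in> R" and x0: "x \<noteq> 0" using assms pos_roots_sub unfolding Rdef by auto
  show ?thesis
  proof (rule ccontr)
    assume "\<not> ?thesis"
    then obtain \<alpha> where "Dp \<alpha>" "P \<alpha> = - x" using R_pm[OF xR] by blast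
    then have "- x \<in> pos_roots R S" using P_pos x0 by force
    then have "x = 0" using pos_neg_zero[OF indS assms] by simp
    then show False using x0 by simp
  qed
qed

lemma reachJ: "(E V)\<^sup>*\<^sup>* s c \<Longrightarrow> c = s \<or> (c \<in> B \<and> c \<in> V)"
  by (induction rule: rtranclp_induct) (auto simp: E_def)

lemma E_mono: "V \<subseteq> W \<Longrightarrow> (E V)\<^sup>*\<^sup>* x y \<Longrightarrow> (E W)\<^sup>*\<^sup>* x y"
  by (rule mono_rtranclp[rule_format, of "E V" "E W"]) (auto simp: E_def)

lemma edge_lift:
  assumes s: "\<sigma> \<in> B - J" and t: "\<theta> \<in> B - J" and lt: "P \<sigma> \<bullet> P \<theta> < 0"
  shows "(E (J \<union> {\<theta>}))\<^sup>*\<^sup>* \<sigma> \<theta>"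
proof (rule ccontr)
  assume nr: "\<not> ?thesis"
  define C where "C = {j\<in>J. (E J)\<^sup>*\<^sup>* \<sigma> j}"
  have reachB: "c \<in> B" if "(E J)\<^sup>*\<^sup>* \<sigma> c" for c using reachJ[OF that] s by auto
  have b: "c \<bullet> j = 0" if c: "(E J)\<^sup>*\<^sup>* \<sigma> c" and j: "j \<in> J - C" for c j
  proof -
    have cB: "c \<in> B" using reachB[OF c] .
    have jB: "j \<in> B" using j JB by auto
    have "c \<noteq> j" using c j unfolding C_def by auto
    then have le: "c \<bullet> j \<le> 0" using simple_inner_nonpos cB jB by auto
    have "\<not> c \<bullet> j < 0"
    proof
      assume "c \<bullet> j < 0"
      then have "E J c j" unfolding E_def using cB jB j by auto
      then have "(E J)\<^sup>*\<^sup>* \<sigma> j" using c by (meson rtranclp.rtrancl_into_rtrancl)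
      then show False using j unfolding C_def by auto
    qed
    then show ?thesis using le by simp
  qed
  have cc: "c \<bullet> \<theta> = 0" if c: "(E J)\<^sup>*\<^sup>* \<sigma> c" for c
  proof -
    have cB: "c \<in> B" using reachB[OF c] .
    have c1: "(E (J \<union> {\<theta>}))\<^sup>*\<^sup>* \<sigma> c" using E_mono[OF _ c, of "J \<union> {\<theta>}"] by auto
    have "c \<noteq> \<theta>" using c1 nr by auto
    then have le: "c \<bullet> \<theta> \<le> 0" using simple_inner_nonpos cB t by auto
    have "\<not> c \<bullet> \<theta> < 0"
    proof
      assume "c \<bullet> \<theta> < 0"
      then have "E (J \<union> {\<theta>}) c \<theta>" unfolding E_def using cB t by auto
      then have "(E (J \<union> {\<theta>}))\<^sup>*\<^sup>* \<sigma> \<theta>" using c1 by (meson rtranclp.rtrancl_into_rtrancl)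
      then show False using nr by simp
    qed
    then show ?thesis using le by simp
  qed
  define q where "q = perp_proj C \<sigma>"
  define p where "p = \<sigma> - q"
  have pC: "p \<in> span C" unfolding p_def q_def by (rule perp_proj_props(1))
  have CJ: "C \<subseteq> J" unfolding C_def by auto
  have Pq: "P \<sigma> = q"
  proof (rule perp_proj_eq)
    show "\<sigma> - q \<in> span J" using pC span_mono[OF CJ] unfolding p_def by auto
    show "\<forall>j\<in>J. orthogonal q j"
    proof
      fix j assume j: "j \<in> J"
      show "orthogonal q j"
      proof (cases "j \<in> C")
        case True then show ?thesis unfolding q_def using perp_proj_props(2) by blast
      next
        case False
        then have jJC: "j \<in> J - C" using j by auto
        have "\<sigma> \<bullet> j = 0" using b[OF rtranclp.rtrancl_refl jJC] .
        moreover have "orthogonal j p"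
          by (rule orthogonal_to_span[OF pC]) (use b jJC in \<open>auto simp: C_def orthogonal_def inner_commute\<close>)
        ultimately show ?thesis unfolding orthogonal_def p_def
          by (simp add: inner_diff_left inner_diff_right inner_commute)
      qed
    qed
  qed
  have "P \<sigma> \<bullet> P \<theta> = q \<bullet> \<theta>"
  proof -
    have "\<theta> - P \<theta> \<in> span J" by (rule perp_proj_props(1))
    then have "P \<sigma> \<bullet> (\<theta> - P \<theta>) = 0" by (rule perp_proj_orth_span)
    then show ?thesis using Pq by (simp add: inner_diff_right)
  qed
  also have "\<dots> = 0"
  proof -
    have "\<sigma> \<bullet> \<theta> = 0" using cc[OF rtranclp.rtrancl_refl] .
    moreover have "orthogonal \<theta> p"
      by (rule orthogonal_to_span[OF pC]) (use cc in \<open>auto simp: C_def orthogonal_def inner_commute\<close>)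
    ultimately show ?thesis unfolding orthogonal_def p_def
      by (simp add: inner_diff_left inner_diff_right inner_commute)
  qed
  finally show False using lt by simp
qed

lemma conn:
  assumes cb: "connected_base S" and s: "s \<in> B - J" and t: "t \<in> B - J"
  shows "(E B)\<^sup>*\<^sup>* s t"
proof -
  let ?Rel = "\<lambda>x y. x \<in> S \<and> y \<in> S \<and> x \<bullet> y < 0"
  have "?Rel\<^sup>*\<^sup>* (P s) (P t)" using cb s t unfolding connected_base_def Sdef by auto
  moreover have "\<forall>t\<in>B - J. P t = y \<longrightarrow> (E B)\<^sup>*\<^sup>* s t" if "?Rel\<^sup>*\<^sup>* (P s) y" for y
    using that
  proof (induction rule: rtranclp_induct)
    case base
    then show ?case using injP s by (auto dest: inj_onD)
  next
    case (step y z)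
    obtain t1 where t1: "t1 \<in> B - J" "P t1 = y" using step(2) unfolding Sdef by auto
    have r1: "(E B)\<^sup>*\<^sup>* s t1" using step(3) t1 by auto
    show ?case
    proof (intro ballI impI)
      fix t' assume t': "t' \<in> B - J" "P t' = z"
      have "(E (J \<union> {t'}))\<^sup>*\<^sup>* t1 t'" using edge_lift[OF t1(1) t'(1)] step(2) t1 t' by auto
      then have "(E B)\<^sup>*\<^sup>* t1 t'" using E_mono[of "J \<union> {t'}" B] t'(1) JB by blast
      then show "(E B)\<^sup>*\<^sup>* s t'" using r1 by (rule rtranclp_trans[rotated])
    qed
  qed
  ultimately show ?thesis using t by blast
qed

lemma last_exit:
  assumes "(E B)\<^sup>*\<^sup>* a c" "a \<notin> V" "a \<in> B"
  shows "\<exists>\<tau>\<in>B. \<tau> \<notin> V \<and> (E V)\<^sup>*\<^sup>* \<tau> c"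
  using assms
proof (induction rule: rtranclp_induct)
  case base then show ?case by blast
next
  case (step b c)
  then obtain \<tau> where tau: "\<tau> \<in> B" "\<tau> \<notin> V" "(E V)\<^sup>*\<^sup>* \<tau> b" by blast
  show ?case
  proof (cases "c \<in> V")
    case True
    then have "E V b c" using step(2) unfolding E_def by auto
    then show ?thesis using tau by (meson rtranclp.rtrancl_into_rtrancl)
  next
    case False
    then show ?thesis using step(2) unfolding E_def by auto
  qed
qed

lemma full_root:
  assumes cb: "connected_base S"
  shows "\<exists>\<rho>\<in>pos_roots R S. supp_root S \<rho> = S"
proof -
  obtain t0 where t0: "t0 \<in> B - J" using JB by auto
  have t0D: "t0 \<in> D" using t0 BD by auto
  have Dt0: "Dp t0" unfolding Dp_def using t0D rep_basis' t0 by simp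
  have rt0: "representation B t0 t0 > 0" using rep_basis' t0 by simp
  have fin: "finite (B - J)" using finB by simp
  have "F \<subseteq> B - J \<longrightarrow> (\<exists>\<alpha>. Dp \<alpha> \<and> representation B \<alpha> t0 > 0 \<and> (\<forall>t\<in>F. representation B \<alpha> t > 0))"
    if "finite F" for F
    using that
  proof (induction F rule: finite_induct)
    case empty then show ?case using Dt0 rt0 by blast
  next
    case (insert t F)
    show ?case
    proof
      assume sub: "insert t F \<subseteq> B - J"
      then obtain \<alpha> where a: "Dp \<alpha>" "representation B \<alpha> t0 > 0" "\<forall>t\<in>F. representation B \<alpha> t > 0"
        using insert by auto
      have "(E B)\<^sup>*\<^sup>* t0 t" using conn[OF cb t0] sub by auto
      from path[OF this a(1,2)] obtain \<alpha>' where "Dp \<alpha>'"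
        "\<forall>b\<in>B. representation B \<alpha> b > 0 \<longrightarrow> representation B \<alpha>' b > 0" "representation B \<alpha>' t > 0"
        by blast
      then show "\<exists>\<alpha>. Dp \<alpha> \<and> representation B \<alpha> t0 > 0 \<and> (\<forall>t\<in>insert t F. representation B \<alpha> t > 0)"
        using a t0 sub by (intro exI[of _ \<alpha>']) auto
    qed
  qed
  then obtain \<alpha> where a: "Dp \<alpha>" "\<forall>t\<in>B - J. representation B \<alpha> t > 0"
    using fin by blast
  have aD: "\<alpha> \<in> D" using a(1) unfolding Dp_def by auto
  have supp: "supp_root S (P \<alpha>) = S"
    unfolding supp_root_def Sdef
  proof (intro equalityI subsetI)
    fix x assume "x \<in> {\<theta> \<in> P ` (B - J). representation (P ` (B - J)) (P \<alpha>) \<theta> \<noteq> 0}"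
    then show "x \<in> P ` (B - J)" by auto
  next
    fix x assume "x \<in> P ` (B - J)"
    then obtain b where b: "b \<in> B - J" "x = P b" by auto
    then have "representation S (P \<alpha>) x > 0" using P_rep[OF aD b(1)] a(2) by simp
    then show "x \<in> {\<theta> \<in> P ` (B - J). representation (P ` (B - J)) (P \<alpha>) \<theta> \<noteq> 0}"
      using b unfolding Sdef by auto
  qed
  have "P \<alpha> \<noteq> 0"
  proof
    assume "P \<alpha> = 0"
    then have "supp_root S (P \<alpha>) = {}" unfolding supp_root_def by (simp add: representation_zero)
    then show False using supp t0 unfolding Sdef by auto
  qed
  then show ?thesis using P_pos[OF a(1)] supp by blast
qed

end



context qrs begin

lemma lift_out:
  assumes I: "I \<subseteq> S" and G: "G \<subseteq> quot_pos R S I"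
    and sG: "supp_set (quot_base S I) G = quot_base S I" and th: "\<theta> \<in> S - I"
  shows "\<exists>x\<in>pos_roots R S. perp_proj I x \<in> G \<and> \<theta> \<in> supp_root S x"
proof -
  have "perp_proj I \<theta> \<in> quot_base S I" unfolding quot_base_def using th by auto
  then obtain g where g: "g \<in> G" "perp_proj I \<theta> \<in> supp_root (quot_base S I) g"
    using sG unfolding supp_set_def by blast
  obtain x where x: "x \<in> pos_roots R S" "g = perp_proj I x"
    using g(1) G unfolding quot_pos_def by auto
  have xs: "x \<in> span S" using x(1) pos_roots_span by blast
  have "representation (quot_base S I) g (perp_proj I \<theta>) = representation S x \<theta>"
    unfolding quot_base_def x(2) by (rule proj_rep[OF indS I xs th])
  then have "\<theta> \<in> supp_root S x" using g(2) th unfolding supp_root_def by auto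
  then show ?thesis using x g by blast
qed

lemma lift_supp:
  assumes cb: "connected_base S" and I: "I \<subset> S" and G: "G \<subseteq> quot_pos R S I"
    and sG: "supp_set (quot_base S I) G = quot_base S I" and th: "\<theta> \<in> S"
  shows "\<exists>x\<in>pos_roots R S. perp_proj I x \<in> G \<and> \<theta> \<in> supp_root S x"
proof (cases "\<theta> \<in> I")
  case False
  then show ?thesis using lift_out[OF _ G sG] I th by blast
next
  case True
  let ?Q = "perp_proj I"
  define V where "V = J \<union> {b\<in>B - J. P b \<in> I}"
  obtain t where t: "t \<in> B - J" "P t = \<theta>" using th unfolding Sdef by auto
  obtain s0 where s0: "s0 \<in> S" "s0 \<notin> I" using I by auto
  obtain t0 where t0: "t0 \<in> B - J" "P t0 = s0" using s0 unfolding Sdef by auto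
  have t0V: "t0 \<notin> V" unfolding V_def using t0 s0 by auto
  have "(E B)\<^sup>*\<^sup>* t0 t" using conn[OF cb t0(1) t(1)] .
  then obtain \<tau> where tau: "\<tau> \<in> B" "\<tau> \<notin> V" "(E V)\<^sup>*\<^sup>* \<tau> t"
    using last_exit t0V t0 by blast
  have tauT: "\<tau> \<in> B - J" and tauI: "P \<tau> \<notin> I" using tau unfolding V_def by auto
  have "P \<tau> \<in> S - I" using tauT tauI unfolding Sdef by auto
  then obtain x where x: "x \<in> pos_roots R S" "?Q x \<in> G" "P \<tau> \<in> supp_root S x"
    using lift_out[OF _ G sG] I by blast
  obtain \<alpha> where a: "Dp \<alpha>" "P \<alpha> = x" using lift[OF x(1)] by blast
  have aD: "\<alpha> \<in> D" using a(1) unfolding Dp_def by auto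
  have "representation B \<alpha> \<tau> \<noteq> 0" using x(3) P_rep[OF aD tauT] a(2) unfolding supp_root_def by auto
  then have ra: "representation B \<alpha> \<tau> > 0" using a(1) tau(1) unfolding Dp_def by force
  obtain \<alpha>' where a': "Dp \<alpha>'" "\<alpha>' - \<alpha> \<in> span V" "representation B \<alpha>' t > 0"
    using path[OF tau(3) a(1) ra] by blast
  have a'D: "\<alpha>' \<in> D" using a'(1) unfolding Dp_def by auto
  have r': "representation S (P \<alpha>') \<theta> > 0" using P_rep[OF a'D t(1)] a'(3) t(2) by simp
  have nz: "P \<alpha>' \<noteq> 0" using r' by (auto simp: representation_zero)
  have pos: "P \<alpha>' \<in> pos_roots R S" using P_pos[OF a'(1) nz] .
  have sup: "\<theta> \<in> supp_root S (P \<alpha>')" using r' th unfolding supp_root_def by auto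
  have "P ` V \<subseteq> insert 0 I"
  proof
    fix y assume "y \<in> P ` V"
    then obtain v where v: "v \<in> V" "y = P v" by auto
    show "y \<in> insert 0 I"
    proof (cases "v \<in> J")
      case True then have "P v = 0" using perp_proj_zero_iff span_base by metis
      then show ?thesis using v by simp
    next
      case False then show ?thesis using v unfolding V_def by auto
    qed
  qed
  then have "span (P ` V) \<subseteq> span I" using span_mono[of "P ` V" "insert 0 I"] by (simp add: span_insert_0)
  moreover have "P (\<alpha>' - \<alpha>) \<in> span (P ` V)"
    using a'(2) linear_span_image[OF perp_proj_linear, of J V] by auto
  ultimately have "P (\<alpha>' - \<alpha>) \<in> span I" by blast
  then have "?Q (P (\<alpha>' - \<alpha>)) = 0" using perp_proj_zero_iff by blast
  then have "?Q (P \<alpha>') = ?Q x"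
    using a(2) linear_diff[OF perp_proj_linear, of J \<alpha>' \<alpha>] linear_diff[OF perp_proj_linear, of I "P \<alpha>'" "P \<alpha>"]
    by simp
  then show ?thesis using pos sup x(2) by metis
qed

end



theorem proposition3p18:
  fixes R S \<Phi> I \<Psi> X :: "'a::euclidean_space set"
  assumes "is_QRS R S"
    and "connected_base S"
    and "\<Phi> \<subseteq> pos_roots R S"
    and "canonical_form R S \<Phi> I \<Psi> X"
  shows "(primitive (quot_roots R I) (quot_base S I) \<Psi> \<longleftrightarrow>
            supp_set S \<Phi> = S \<and> supp_set S (pos_roots R S - \<Phi>) = S)
       \<and> (\<Psi> = {} \<longleftrightarrow> supp_set S \<Phi> \<subset> S \<and> supp_set S (pos_roots R S - \<Phi>) = S)
       \<and> (\<Psi> = quot_pos R S I \<longleftrightarrow> supp_set S (pos_roots R S - \<Phi>) \<subset> S \<and> supp_set S \<Phi> = S)"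
proof -
  obtain D B J where DBJ: "root_system D" "root_base D B" "J \<subset> B"
      "R = perp_proj J ` D - {0}" "S = perp_proj J ` (B - J)"
    using assms(1) unfolding is_QRS_def by blast
  interpret qrs D B J R S using DBJ by unfold_locales auto
  let ?Rp = "pos_roots R S"
  let ?Q = "perp_proj I"
  let ?QP = "quot_pos R S I"
  let ?prim = "primitive (quot_roots R I) (quot_base S I) \<Psi>"
  have I: "I \<subset> S" and Psi: "\<Psi> \<subseteq> ?QP" and X: "X \<subseteq> sub_pos R S I"
    and Phi: "\<Phi> = inflation R S I \<Psi> X"
    and disj: "?prim \<or> \<Psi> = {} \<or> \<Psi> = ?QP"
    using assms(4) unfolding canonical_form_def by auto
  have IS: "I \<subseteq> S" using I by auto
  have QPeq: "pos_roots (quot_roots R I) (quot_base S I) = ?QP"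
    by (rule quot_pos_eq[OF indS IS pm])
  have Xs: "X \<subseteq> span I" using X unfolding sub_pos_def by auto
  have suppI: "supp_set S A \<subseteq> I" if "A \<subseteq> span I" for A
    using supp_span_sub[OF indS IS] that unfolding supp_set_def by blast
  obtain \<rho> where rho: "\<rho> \<in> ?Rp" "supp_root S \<rho> = S" using full_root[OF assms(2)] by blast
  have rhoI: "\<rho> \<notin> span I"
  proof
    assume "\<rho> \<in> span I"
    then have "S \<subseteq> I" using supp_span_sub[OF indS IS] rho(2) by metis
    then show False using I by auto
  qed
  have Qrho: "?Q \<rho> \<in> ?QP" using rho(1) rhoI perp_proj_zero_iff[of I \<rho>] unfolding quot_pos_def by auto
  have sub_supp: "supp_root S x \<subseteq> supp_set S A" if "x \<in> A" for x A
    using that unfolding supp_set_def by auto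
  have full: "supp_set S A = S" if "\<rho> \<in> A" for A
    using sub_supp[OF that] rho(2) supp_set_sub[of S A] by auto
  have C1: "supp_set S \<Phi> \<subset> S \<and> supp_set S (?Rp - \<Phi>) = S" if e: "\<Psi> = {}"
  proof -
    have "\<Phi> = X" using Phi e unfolding inflation_def by auto
    then have "\<Phi> \<subseteq> span I" using Xs by simp
    then have "supp_set S \<Phi> \<subseteq> I" "\<rho> \<in> ?Rp - \<Phi>" using suppI rho(1) rhoI by auto
    then show ?thesis using I full by auto
  qed
  have C2: "supp_set S (?Rp - \<Phi>) \<subset> S \<and> supp_set S \<Phi> = S" if e: "\<Psi> = ?QP"
  proof -
    have "\<rho> \<in> \<Phi>" using Phi e rho(1) Qrho unfolding inflation_def by auto
    moreover have "?Rp - \<Phi> \<subseteq> span I"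
    proof
      fix x assume x: "x \<in> ?Rp - \<Phi>"
      then have "?Q x \<notin> ?QP" using Phi e unfolding inflation_def by auto
      then have "?Q x = 0" using x unfolding quot_pos_def by auto
      then show "x \<in> span I" using perp_proj_zero_iff by blast
    qed
    ultimately show ?thesis using suppI[of "?Rp - \<Phi>"] I full by auto
  qed
  have C3: "supp_set S \<Phi> = S \<and> supp_set S (?Rp - \<Phi>) = S" if pr: ?prim
  proof -
    have indQ: "independent (quot_base S I)" unfolding quot_base_def by (rule proj_indep[OF indS IS])
    have z: "0 \<notin> quot_roots R I" unfolding quot_roots_def by auto
    have sub: "\<Psi> \<subseteq> pos_roots (quot_roots R I) (quot_base S I)" using Psi QPeq by simp
    have s1: "supp_set (quot_base S I) \<Psi> = quot_base S I"
      and s2: "supp_set (quot_base S I) (?QP - \<Psi>) = quot_base S I"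
      using prim_supp[OF indQ z pr sub] QPeq by auto
    have "S \<subseteq> supp_set S \<Phi>"
    proof
      fix \<theta> assume th: "\<theta> \<in> S"
      obtain x where x: "x \<in> ?Rp" "?Q x \<in> \<Psi>" "\<theta> \<in> supp_root S x"
        using lift_supp[OF assms(2) I Psi s1 th] by blast
      have "x \<in> \<Phi>" using Phi x unfolding inflation_def by auto
      then show "\<theta> \<in> supp_set S \<Phi>" using sub_supp x(3) by blast
    qed
    moreover have "S \<subseteq> supp_set S (?Rp - \<Phi>)"
    proof
      fix \<theta> assume th: "\<theta> \<in> S"
      obtain x where x: "x \<in> ?Rp" "?Q x \<in> ?QP - \<Psi>" "\<theta> \<in> supp_root S x"
        using lift_supp[OF assms(2) I _ s2 th] by blast
      have "?Q x \<noteq> 0" using x(2) unfolding quot_pos_def by auto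
      then have "x \<notin> span I" using perp_proj_zero_iff by blast
      then have "x \<notin> \<Phi>" using Phi x(2) Xs unfolding inflation_def by auto
      then show "\<theta> \<in> supp_set S (?Rp - \<Phi>)" using sub_supp x(1,3) by blast
    qed
    ultimately show ?thesis using supp_set_sub[of S] by (simp add: subset_antisym)
  qed
  have pne: "\<Psi> \<noteq> {} \<and> \<Psi> \<noteq> ?QP" if ?prim
    using that QPeq unfolding primitive_def by auto
  have QPne: "?QP \<noteq> {}" using Qrho by auto
  show ?thesis
    using disj C1 C2 C3 pne QPne by blast
qed

end
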